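(* Let $X$ and $Y$ be slices that are jointly spacelike (i.e. $X\cup Y$ is spacelike) and satisfy $X\cap Y=\varnothing$. Then the product and the coproduct of $X$ and $Y$ exist in $\mathsf{Slice}$, and both are given by the set-theoretic union $X\cup Y$.
   Context: Fix a connected, time-orientable Lorentzian manifold $\mathcal{M}$ with a fixed time-orientation (no further causality assumptions; closed timelike curves may exist). A causal curve is an equivalence class, up to monotone reparametrisation, of smooth regular paths $\mu:\iota\to\mathcal{M}$ ($\iota\subseteq\mathbb{R}$ an interval) whose tangent is everywhere timelike or null; it is future-directed if the tangent is everywhere future-directed. Write $x\prec y$ if $x=y$ or there is a future-directed causal curve from $x$ to $y$. A region $A\subseteq\mathcal{M}$ is spacelike if no two distinct points $x,y\in A$ satisfy $x\prec y$. A slice is a closed spacelike subset of $\mathcal{M}$; slices $X,Y$ are jointly spacelike if $X\cup Y$ is spacelike. For regions $A,B$, $\mathcal{C}[A,B]$ is the set of future-directed causal curves passing through $A$ and then $B$: for a representative path $\mu:\iota\to\mathcal{M}$, there exists $q\in\iota$ with $\mu(q)\in B$, and for every such $q$ there exists $p\le q$ with $\mu(p)\in A$. Write $\mathcal{C}[A]:=\mathcal{C}[A,A]$. The category $\mathsf{Slice}$ has slices as objects, $\mathsf{Slice}(X,Y)=\mathcal{P}(\mathcal{C}[X,Y])$ (the powerset), composition $T\circ S:=T\cap S$, and identities $1_X=\mathcal{C}[X,X]$. *)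

theory Defs
  imports "HOL-Analysis.Analysis"
begin

text \<open>f is C-infinity on S: there is a family of iterated directional derivatives
  D vs (vs = list of directions) with D [] = f on S and each D vs differentiable
  at every point of S (within S) with derivative v maps to D (v # vs).
  Differentiability to all orders implies continuity of all derivatives.\<close>
definition smooth_on :: "'a::real_normed_vector set \<Rightarrow> ('a \<Rightarrow> 'b::real_normed_vector) \<Rightarrow> bool" where
  "smooth_on S f \<longleftrightarrow> (\<exists>D :: 'a list \<Rightarrow> 'a \<Rightarrow> 'b.
      (\<forall>x\<in>S. D [] x = f x) \<and>
      (\<forall>vs. \<forall>x\<in>S. (D vs has_derivative (\<lambda>v. D (v # vs) x)) (at x within S)))"

type_synonym ('m, 'n) chart = "'m set \<times> ('m \<Rightarrow> real^'n)"

definition lorentz_sig :: "real^'n^'n \<Rightarrow> bool" where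
  "lorentz_sig M \<longleftrightarrow> transpose M = M \<and>
     (\<exists>(P::real^'n^'n) (i0::'n). invertible P \<and>
        transpose P ** M ** P = (\<chi> i j. if i = j then (if i = i0 then -1 else 1) else 0))"

text \<open>The Lorentzian metric is given in each chart c
  by the matrix G c p (coordinates of the chart c, at p in the chart domain); the
  fixed time orientation is given by a continuous timelike vector field whose
  coordinate expression in chart c at p is T c p.\<close>
definition lorentzian_manifold ::
  "('m::{t2_space, second_countable_topology}, 'n::finite) chart set \<Rightarrow>
   (('m, 'n) chart \<Rightarrow> 'm \<Rightarrow> real^'n^'n) \<Rightarrow> (('m, 'n) chart \<Rightarrow> 'm \<Rightarrow> real^'n) \<Rightarrow> bool" where
  "lorentzian_manifold A G T \<longleftrightarrow>
     CARD('n) \<ge> 2 \<and>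
     connected (UNIV :: 'm set) \<and>
     \<Union> (fst ` A) = UNIV \<and>
     (\<forall>(U, \<phi>)\<in>A. open U \<and> open (\<phi> ` U) \<and> (\<exists>\<psi>. homeomorphism U (\<phi> ` U) \<phi> \<psi>)) \<and>
     (\<forall>(U, \<phi>)\<in>A. \<forall>(V, \<psi>)\<in>A. smooth_on (\<phi> ` (U \<inter> V)) (\<psi> \<circ> inv_into U \<phi>)) \<and>
     (\<forall>c\<in>A. smooth_on (snd c ` fst c) (\<lambda>x. G c (inv_into (fst c) (snd c) x))) \<and>
     (\<forall>c\<in>A. \<forall>p\<in>fst c. lorentz_sig (G c p)) \<and>
     (\<forall>c\<in>A. continuous_on (snd c ` fst c) (\<lambda>x. T c (inv_into (fst c) (snd c) x))) \<and>
     (\<forall>c\<in>A. \<forall>p\<in>fst c. T c p \<bullet> (G c p *v T c p) < 0) \<and>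
     (\<forall>c\<in>A. \<forall>d\<in>A. \<forall>p\<in>fst c \<inter> fst d. \<forall>J.
        ((snd d \<circ> inv_into (fst c) (snd c)) has_derivative J) (at (snd c p)) \<longrightarrow>
          (\<forall>v w. v \<bullet> (G c p *v w) = J v \<bullet> (G d p *v J w)) \<and> J (T c p) = T d p)"

definition fd_causal_path ::
  "('m::topological_space, 'n::finite) chart set \<Rightarrow>
   (('m, 'n) chart \<Rightarrow> 'm \<Rightarrow> real^'n^'n) \<Rightarrow> (('m, 'n) chart \<Rightarrow> 'm \<Rightarrow> real^'n) \<Rightarrow>
   real set \<Rightarrow> (real \<Rightarrow> 'm) \<Rightarrow> bool" where
  "fd_causal_path A G T I \<mu> \<longleftrightarrow>
     is_interval I \<and> interior I \<noteq> {} \<and>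
     continuous_on I \<mu> \<and>
     (\<forall>c\<in>A. smooth_on (I \<inter> \<mu> -` fst c) (snd c \<circ> \<mu>)) \<and>
     (\<forall>c\<in>A. \<forall>t\<in>I. \<mu> t \<in> fst c \<longrightarrow>
        (\<forall>v. ((snd c \<circ> \<mu>) has_vector_derivative v) (at t within I) \<longrightarrow>
           v \<noteq> 0 \<and> v \<bullet> (G c (\<mu> t) *v v) \<le> 0 \<and> v \<bullet> (G c (\<mu> t) *v T c (\<mu> t)) < 0))"

definition reparam :: "real set \<times> (real \<Rightarrow> 'm) \<Rightarrow> real set \<times> (real \<Rightarrow> 'm) \<Rightarrow> bool" where
  "reparam P Q \<longleftrightarrow> (\<exists>h. bij_betw h (fst Q) (fst P) \<and> strict_mono_on (fst Q) h \<and>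
                         (\<forall>t\<in>fst Q. snd Q t = snd P (h t)))"

definition fd_curves ::
  "('m::topological_space, 'n::finite) chart set \<Rightarrow>
   (('m, 'n) chart \<Rightarrow> 'm \<Rightarrow> real^'n^'n) \<Rightarrow> (('m, 'n) chart \<Rightarrow> 'm \<Rightarrow> real^'n) \<Rightarrow>
   (real set \<times> (real \<Rightarrow> 'm)) set set" where
  "fd_curves A G T = {c. \<exists>I \<mu>. fd_causal_path A G T I \<mu> \<and>
      c = {(J, \<nu>). fd_causal_path A G T J \<nu> \<and> reparam (I, \<mu>) (J, \<nu>)}}"

definition cprec ::
  "('m::topological_space, 'n::finite) chart set \<Rightarrow>
   (('m, 'n) chart \<Rightarrow> 'm \<Rightarrow> real^'n^'n) \<Rightarrow> (('m, 'n) chart \<Rightarrow> 'm \<Rightarrow> real^'n) \<Rightarrow>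
   'm \<Rightarrow> 'm \<Rightarrow> bool" where
  "cprec A G T x y \<longleftrightarrow> x = y \<or>
     (\<exists>a b \<mu>. a < b \<and> fd_causal_path A G T {a..b} \<mu> \<and> \<mu> a = x \<and> \<mu> b = y)"

definition spacelike ::
  "('m::topological_space, 'n::finite) chart set \<Rightarrow>
   (('m, 'n) chart \<Rightarrow> 'm \<Rightarrow> real^'n^'n) \<Rightarrow> (('m, 'n) chart \<Rightarrow> 'm \<Rightarrow> real^'n) \<Rightarrow>
   'm set \<Rightarrow> bool" where
  "spacelike A G T S \<longleftrightarrow> (\<forall>x\<in>S. \<forall>y\<in>S. x \<noteq> y \<longrightarrow> \<not> cprec A G T x y)"

definition slice ::
  "('m::topological_space, 'n::finite) chart set \<Rightarrow>
   (('m, 'n) chart \<Rightarrow> 'm \<Rightarrow> real^'n^'n) \<Rightarrow> (('m, 'n) chart \<Rightarrow> 'm \<Rightarrow> real^'n) \<Rightarrow>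
   'm set \<Rightarrow> bool" where
  "slice A G T S \<longleftrightarrow> closed S \<and> spacelike A G T S"

definition CC ::
  "('m::topological_space, 'n::finite) chart set \<Rightarrow>
   (('m, 'n) chart \<Rightarrow> 'm \<Rightarrow> real^'n^'n) \<Rightarrow> (('m, 'n) chart \<Rightarrow> 'm \<Rightarrow> real^'n) \<Rightarrow>
   'm set \<Rightarrow> 'm set \<Rightarrow> (real set \<times> (real \<Rightarrow> 'm)) set set" where
  "CC A G T S1 S2 = {c \<in> fd_curves A G T. \<forall>(I, \<mu>)\<in>c.
      (\<exists>q\<in>I. \<mu> q \<in> S2) \<and> (\<forall>q\<in>I. \<mu> q \<in> S2 \<longrightarrow> (\<exists>p\<in>I. p \<le> q \<and> \<mu> p \<in> S1))}"

text \<open>Hom-sets: Slice(X,Y) = Pow (C[X,Y]); composition T o S = T \<inter> S; identity C[X,X].\<close>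
definition slice_hom ::
  "('m::topological_space, 'n::finite) chart set \<Rightarrow>
   (('m, 'n) chart \<Rightarrow> 'm \<Rightarrow> real^'n^'n) \<Rightarrow> (('m, 'n) chart \<Rightarrow> 'm \<Rightarrow> real^'n) \<Rightarrow>
   'm set \<Rightarrow> 'm set \<Rightarrow> (real set \<times> (real \<Rightarrow> 'm)) set set set" where
  "slice_hom A G T X Y = Pow (CC A G T X Y)"

definition slice_comp :: "'c set \<Rightarrow> 'c set \<Rightarrow> 'c set" where
  "slice_comp S2 S1 = S2 \<inter> S1"

definition is_slice_product ::
  "('m::topological_space, 'n::finite) chart set \<Rightarrow>
   (('m, 'n) chart \<Rightarrow> 'm \<Rightarrow> real^'n^'n) \<Rightarrow> (('m, 'n) chart \<Rightarrow> 'm \<Rightarrow> real^'n) \<Rightarrow>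
   'm set \<Rightarrow> 'm set \<Rightarrow> 'm set \<Rightarrow> bool" where
  "is_slice_product A G T X Y P \<longleftrightarrow> slice A G T P \<and>
     (\<exists>p1 \<in> slice_hom A G T P X. \<exists>p2 \<in> slice_hom A G T P Y.
        \<forall>Z. slice A G T Z \<longrightarrow>
          (\<forall>f \<in> slice_hom A G T Z X. \<forall>g \<in> slice_hom A G T Z Y.
             (\<exists>!h. h \<in> slice_hom A G T Z P \<and> slice_comp p1 h = f \<and> slice_comp p2 h = g)))"

definition is_slice_coproduct ::
  "('m::topological_space, 'n::finite) chart set \<Rightarrow>
   (('m, 'n) chart \<Rightarrow> 'm \<Rightarrow> real^'n^'n) \<Rightarrow> (('m, 'n) chart \<Rightarrow> 'm \<Rightarrow> real^'n) \<Rightarrow>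
   'm set \<Rightarrow> 'm set \<Rightarrow> 'm set \<Rightarrow> bool" where
  "is_slice_coproduct A G T X Y Q \<longleftrightarrow> slice A G T Q \<and>
     (\<exists>i1 \<in> slice_hom A G T X Q. \<exists>i2 \<in> slice_hom A G T Y Q.
        \<forall>Z. slice A G T Z \<longrightarrow>
          (\<forall>f \<in> slice_hom A G T X Z. \<forall>g \<in> slice_hom A G T Y Z.
             (\<exists>!h. h \<in> slice_hom A G T Q Z \<and> slice_comp h i1 = f \<and> slice_comp h i2 = g)))"

end

theory Submission
  imports Defs
begin


lemma smooth_on_subset: "smooth_on S f \<Longrightarrow> S' \<subseteq> S \<Longrightarrow> smooth_on S' f"
proof -
  assume a: "smooth_on S f" and b: "S' \<subseteq> S"
  then obtain D where "\<forall>x\<in>S. D [] x = f x" "\<forall>vs. \<forall>x\<in>S. (D vs has_derivative (\<lambda>v. D (v # vs) x)) (at x within S)"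
    unfolding smooth_on_def by blast
  note DD = this
  have "\<forall>vs. \<forall>x\<in>S'. (D vs has_derivative (\<lambda>v. D (v # vs) x)) (at x within S')"
  proof (intro allI ballI)
    fix vs x assume "x \<in> S'"
    then have "x \<in> S" using b by blast
    then show "(D vs has_derivative (\<lambda>v. D (v # vs) x)) (at x within S')"
      using has_derivative_subset[OF DD(2)[rule_format, OF \<open>x \<in> S\<close>] b] by simp
  qed
  then show ?thesis unfolding smooth_on_def using b DD(1)
    by (intro exI[of _ D]) blast
qed

lemma restrict_path:
  assumes lm: "lorentzian_manifold A G T" and P: "fd_causal_path A G T I \<mu>"
    and s: "s \<in> I" and t: "t \<in> I" and st: "s < t"
  shows "fd_causal_path A G T {s..t} \<mu>"
proof -
  have iI: "is_interval I" using P by (simp add: fd_causal_path_def)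
  have sub: "{s..t} \<subseteq> I"
  proof
    fix x assume "x \<in> {s..t}"
    then have "s \<le> x" "x \<le> t" by auto
    then show "x \<in> I" using iI s t unfolding is_interval_1 by blast
  qed
  have cont: "continuous_on I \<mu>" using P by (simp add: fd_causal_path_def)
  have sm: "\<forall>c\<in>A. smooth_on ({s..t} \<inter> \<mu> -` fst c) (snd c \<circ> \<mu>)"
    using P sub unfolding fd_causal_path_def by (meson Int_mono order_refl smooth_on_subset)
  have der: "v \<noteq> 0 \<and> v \<bullet> (G c (\<mu> \<tau>) *v v) \<le> 0 \<and> v \<bullet> (G c (\<mu> \<tau>) *v T c (\<mu> \<tau>)) < 0"
    if c: "c \<in> A" and tau: "\<tau> \<in> {s..t}" and mc: "\<mu> \<tau> \<in> fst c"
      and v: "((snd c \<circ> \<mu>) has_vector_derivative v) (at \<tau> within {s..t})" for c \<tau> v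
  proof -
    obtain U \<phi> where c_eq: "c = (U, \<phi>)" by fastforce
    have "\<forall>(U, \<phi>)\<in>A. open U \<and> open (\<phi> ` U) \<and> (\<exists>\<psi>. homeomorphism U (\<phi> ` U) \<phi> \<psi>)"
      using lm unfolding lorentzian_manifold_def by (elim conjE) assumption
    then have oU: "open U" using c unfolding c_eq by auto
    define S where "S = I \<inter> \<mu> -` U"
    have "\<forall>c\<in>A. smooth_on (I \<inter> \<mu> -` fst c) (snd c \<circ> \<mu>)" using P unfolding fd_causal_path_def by blast
    then have "smooth_on S (\<phi> \<circ> \<mu>)" using c unfolding c_eq S_def by auto
    then obtain D where D0: "\<forall>x\<in>S. D [] x = (\<phi> \<circ> \<mu>) x"
        and DD: "\<forall>vs. \<forall>x\<in>S. (D vs has_derivative (\<lambda>v. D (v # vs) x)) (at x within S)"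
      unfolding smooth_on_def by blast
    have tauS: "\<tau> \<in> S" using tau sub mc c_eq unfolding S_def by auto
    have d1: "((\<phi> \<circ> \<mu>) has_derivative (\<lambda>v. D [v] \<tau>)) (at \<tau> within S)"
      by (rule has_derivative_transform_within[OF DD[rule_format, OF tauS, of "[]"] zero_less_one tauS])
         (use D0 in auto)
    obtain V where oV: "open V" and VI: "V \<inter> I = \<mu> -` U \<inter> I"
      using cont oU unfolding continuous_on_open_invariant by blast
    have tauV: "\<tau> \<in> V" using tauS VI unfolding S_def by auto
    have "at \<tau> within S = at \<tau> within I"
      by (rule at_within_nhd[OF tauV oV]) (use VI in \<open>auto simp: S_def\<close>)
    with d1 have d2: "((\<phi> \<circ> \<mu>) has_derivative (\<lambda>v. D [v] \<tau>)) (at \<tau> within I)" by simp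
    have lin: "linear (\<lambda>v. D [v] \<tau>)" using d2 has_derivative_linear by blast
    have "(\<lambda>v. D [v] \<tau>) = (\<lambda>v::real. v *\<^sub>R D [1] \<tau>)"
    proof
      fix x :: real
      have "D [x *\<^sub>R 1] \<tau> = x *\<^sub>R D [1] \<tau>" using linear_scale[OF lin] by blast
      then show "D [x] \<tau> = x *\<^sub>R D [1] \<tau>" by simp
    qed
    with d2 have d3: "((\<phi> \<circ> \<mu>) has_vector_derivative D [1] \<tau>) (at \<tau> within I)"
      unfolding has_vector_derivative_def by simp
    have PP: "\<forall>c\<in>A. \<forall>t\<in>I. \<mu> t \<in> fst c \<longrightarrow>
        (\<forall>v. ((snd c \<circ> \<mu>) has_vector_derivative v) (at t within I) \<longrightarrow>
           v \<noteq> 0 \<and> v \<bullet> (G c (\<mu> t) *v v) \<le> 0 \<and> v \<bullet> (G c (\<mu> t) *v T c (\<mu> t)) < 0)"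
      using P unfolding fd_causal_path_def by blast
    have tauI: "\<tau> \<in> I" using tau sub by blast
    have d3': "((snd c \<circ> \<mu>) has_vector_derivative D [1] \<tau>) (at \<tau> within I)" using d3 c_eq by simp
    have prp: "D [1] \<tau> \<noteq> 0 \<and> D [1] \<tau> \<bullet> (G c (\<mu> \<tau>) *v D [1] \<tau>) \<le> 0 \<and> D [1] \<tau> \<bullet> (G c (\<mu> \<tau>) *v T c (\<mu> \<tau>)) < 0"
      using PP[rule_format, OF c tauI mc d3'] .
    have d4: "((\<phi> \<circ> \<mu>) has_vector_derivative D [1] \<tau>) (at \<tau> within cbox s t)"
      using has_vector_derivative_within_subset[OF d3 sub] by simp
    have "v = D [1] \<tau>"
      by (rule vector_derivative_unique_within_closed_interval[OF st _ _ d4]) (use tau v c_eq in auto)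
    with prp show ?thesis by simp
  qed
  have c2: "continuous_on {s..t} \<mu>" using continuous_on_subset[OF cont sub] .
  have i2: "interior {s..t} \<noteq> {}" using st by simp
  show ?thesis unfolding fd_causal_path_def
    apply (intro conjI is_interval_cc i2 c2 sm)
    using der by blast
qed



lemma curve_elem_path:
  assumes "c \<in> fd_curves A G T" "(I, \<mu>) \<in> c" shows "fd_causal_path A G T I \<mu>"
  using assms unfolding fd_curves_def by auto

lemma curve_nonempty:
  assumes "c \<in> fd_curves A G T" shows "c \<noteq> {}"
proof -
  obtain I \<mu> where P: "fd_causal_path A G T I \<mu>"
    and c: "c = {(J, \<nu>). fd_causal_path A G T J \<nu> \<and> reparam (I, \<mu>) (J, \<nu>)}"
    using assms unfolding fd_curves_def by blast
  have "reparam (I, \<mu>) (I, \<mu>)" unfolding reparam_def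
    by (intro exI[of _ id]) (auto simp: strict_mono_on_def)
  then have "(I, \<mu>) \<in> c" using P c by simp
  then show ?thesis by blast
qed

lemma curve_image:
  assumes "c \<in> fd_curves A G T" "(I, \<mu>) \<in> c" "(J, \<nu>) \<in> c" shows "\<mu> ` I = \<nu> ` J"
proof -
  obtain I0 \<mu>0 where c: "c = {(J, \<nu>). fd_causal_path A G T J \<nu> \<and> reparam (I0, \<mu>0) (J, \<nu>)}"
    using assms unfolding fd_curves_def by blast
  have img: "\<nu> ` J = \<mu>0 ` I0" if "reparam (I0, \<mu>0) (J, \<nu>)" for J \<nu>
  proof -
    have "\<exists>h. bij_betw h J I0 \<and> (\<forall>t\<in>J. \<nu> t = \<mu>0 (h t))"
      using that unfolding reparam_def by auto
    then obtain h where h: "bij_betw h J I0" "\<forall>t\<in>J. \<nu> t = \<mu>0 (h t)" by blast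
    have "\<nu> ` J = (\<mu>0 \<circ> h) ` J" by (rule image_cong) (simp_all add: h(2))
    then have "\<nu> ` J = \<mu>0 ` (h ` J)" by (simp add: image_comp)
    also have "h ` J = I0" using h(1) by (simp add: bij_betw_def)
    finally show ?thesis .
  qed
  have "reparam (I0, \<mu>0) (I, \<mu>)" using assms(2) c by simp
  moreover have "reparam (I0, \<mu>0) (J, \<nu>)" using assms(3) c by simp
  ultimately show ?thesis using img by simp
qed

lemma no_both:
  assumes lm: "lorentzian_manifold A G T" and sp: "spacelike A G T (X \<union> Y)"
    and dj: "X \<inter> Y = {}" and P: "fd_causal_path A G T I \<mu>"
    and p: "p \<in> I" "\<mu> p \<in> X" and q: "q \<in> I" "\<mu> q \<in> Y"
  shows False
proof -
  have ne: "\<mu> p \<noteq> \<mu> q" using p(2) q(2) dj by auto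
  have spX: "\<forall>x\<in>X \<union> Y. \<forall>y\<in>X \<union> Y. x \<noteq> y \<longrightarrow> \<not> cprec A G T x y"
    using sp unfolding spacelike_def .
  have "p \<noteq> q" using ne by auto
  then consider "p < q" | "q < p" by linarith
  then show False
  proof cases
    case 1
    have "fd_causal_path A G T {p..q} \<mu>" using restrict_path[OF lm P p(1) q(1) 1] .
    then have "cprec A G T (\<mu> p) (\<mu> q)" unfolding cprec_def using 1
      by (intro disjI2 exI[of _ p] exI[of _ q] exI[of _ \<mu>]) simp
    moreover have "\<mu> p \<in> X \<union> Y" "\<mu> q \<in> X \<union> Y" using p(2) q(2) by auto
    ultimately show False using spX ne by auto
  next
    case 2
    have "fd_causal_path A G T {q..p} \<mu>" using restrict_path[OF lm P q(1) p(1) 2] .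
    then have "cprec A G T (\<mu> q) (\<mu> p)" unfolding cprec_def using 2
      by (intro disjI2 exI[of _ q] exI[of _ p] exI[of _ \<mu>]) simp
    moreover have "\<mu> p \<in> X \<union> Y" "\<mu> q \<in> X \<union> Y" using p(2) q(2) by auto
    ultimately show False using spX ne by auto
  qed
qed
definition HH :: "('m::topological_space, 'n::finite) chart set \<Rightarrow>
   (('m, 'n) chart \<Rightarrow> 'm \<Rightarrow> real^'n^'n) \<Rightarrow> (('m, 'n) chart \<Rightarrow> 'm \<Rightarrow> real^'n) \<Rightarrow>
   'm set \<Rightarrow> (real set \<times> (real \<Rightarrow> 'm)) set set" where
  "HH A G T S = {c \<in> fd_curves A G T. \<forall>(I, \<mu>)\<in>c. \<exists>q\<in>I. \<mu> q \<in> S}"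

lemma HH_split:
  assumes "c \<in> fd_curves A G T" "\<forall>(I, \<mu>)\<in>c. \<exists>q\<in>I. \<mu> q \<in> X \<union> Y"
  shows "c \<in> HH A G T X \<or> c \<in> HH A G T Y"
proof -
  obtain I0 \<mu>0 where e0: "(I0, \<mu>0) \<in> c" using curve_nonempty[OF assms(1)] by auto
  then obtain q0 where q0: "q0 \<in> I0" "\<mu>0 q0 \<in> X \<union> Y" using assms(2) by blast
  have all: "\<exists>q\<in>I. \<mu> q = \<mu>0 q0" if "(I, \<mu>) \<in> c" for I \<mu>
  proof -
    have "\<mu>0 q0 \<in> \<mu> ` I" using curve_image[OF assms(1) e0 that] q0(1) by auto
    then show ?thesis by auto
  qed
  show ?thesis
  proof (cases "\<mu>0 q0 \<in> X")
    case True
    have "\<forall>(I, \<mu>)\<in>c. \<exists>q\<in>I. \<mu> q \<in> X"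
    proof clarify
      fix I \<mu> assume "(I, \<mu>) \<in> c"
      then show "\<exists>q\<in>I. \<mu> q \<in> X" proof -
        obtain q where "q \<in> I" "\<mu> q = \<mu>0 q0" using all[OF \<open>(I, \<mu>) \<in> c\<close>] by blast
        then show ?thesis using True by (intro bexI[of _ q]) simp_all
      qed
    qed
    then have "c \<in> HH A G T X" unfolding HH_def using assms(1) by blast
    then show ?thesis ..
  next
    case False
    then have "\<mu>0 q0 \<in> Y" using q0 by blast
    have "\<forall>(I, \<mu>)\<in>c. \<exists>q\<in>I. \<mu> q \<in> Y"
    proof clarify
      fix I \<mu> assume "(I, \<mu>) \<in> c"
      then show "\<exists>q\<in>I. \<mu> q \<in> Y" proof -
        obtain q where "q \<in> I" "\<mu> q = \<mu>0 q0" using all[OF \<open>(I, \<mu>) \<in> c\<close>] by blast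
        then show ?thesis using \<open>\<mu>0 q0 \<in> Y\<close> by (intro bexI[of _ q]) simp_all
      qed
    qed
    then have "c \<in> HH A G T Y" unfolding HH_def using assms(1) by blast
    then show ?thesis ..
  qed
qed

lemma HH_disj:
  assumes lm: "lorentzian_manifold A G T" and sp: "spacelike A G T (X \<union> Y)"
    and dj: "X \<inter> Y = {}"
  shows "HH A G T X \<inter> HH A G T Y = {}"
proof (rule ccontr)
  assume "HH A G T X \<inter> HH A G T Y \<noteq> {}"
  then obtain c where cX: "c \<in> HH A G T X" and cY: "c \<in> HH A G T Y" by blast
  then have cf: "c \<in> fd_curves A G T" unfolding HH_def by blast
  obtain I \<mu> where e: "(I, \<mu>) \<in> c" using curve_nonempty[OF cf] by auto
  obtain p where p: "p \<in> I" "\<mu> p \<in> X" using cX e unfolding HH_def by blast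
  obtain q where q: "q \<in> I" "\<mu> q \<in> Y" using cY e unfolding HH_def by blast
  show False using no_both[OF lm sp dj curve_elem_path[OF cf e] p q] .
qed


lemma CC_sub_HH2: "CC A G T S1 S2 \<subseteq> HH A G T S2"
  unfolding CC_def HH_def by auto

lemma CC_sub_HH1: "CC A G T S1 S2 \<subseteq> HH A G T S1"
proof
  fix c assume c: "c \<in> CC A G T S1 S2"
  have "\<exists>p\<in>I. \<mu> p \<in> S1" if e: "(I, \<mu>) \<in> c" for I \<mu>
  proof -
    have "(\<exists>q\<in>I. \<mu> q \<in> S2) \<and> (\<forall>q\<in>I. \<mu> q \<in> S2 \<longrightarrow> (\<exists>p\<in>I. p \<le> q \<and> \<mu> p \<in> S1))"
      using c e unfolding CC_def by auto
    then show ?thesis by auto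
  qed
  then show "c \<in> HH A G T S1" using c unfolding CC_def HH_def by auto
qed

lemma HH_eq_CC: "S2 \<subseteq> S1 \<Longrightarrow> HH A G T S2 = CC A G T S1 S2"
  unfolding CC_def HH_def by fastforce

lemma CC_mono1: "S1 \<subseteq> S1' \<Longrightarrow> CC A G T S1 S2 \<subseteq> CC A G T S1' S2"
  unfolding CC_def by fastforce

lemma HH_union:
  "HH A G T (X \<union> Y) \<subseteq> HH A G T X \<union> HH A G T Y"
proof
  fix c assume c: "c \<in> HH A G T (X \<union> Y)"
  then have "c \<in> fd_curves A G T" "\<forall>(I, \<mu>)\<in>c. \<exists>q\<in>I. \<mu> q \<in> X \<union> Y" unfolding HH_def by auto
  from HH_split[OF this] show "c \<in> HH A G T X \<union> HH A G T Y" by blast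
qed

lemma CC_target_union:
  assumes lm: "lorentzian_manifold A G T" and sp: "spacelike A G T (X \<union> Y)"
    and dj: "X \<inter> Y = {}"
  shows "CC A G T Z X \<subseteq> CC A G T Z (X \<union> Y)"
proof
  fix c assume c: "c \<in> CC A G T Z X"
  then have cf: "c \<in> fd_curves A G T" unfolding CC_def by blast
  have "(\<exists>q\<in>I. \<mu> q \<in> X \<union> Y) \<and> (\<forall>q\<in>I. \<mu> q \<in> X \<union> Y \<longrightarrow> (\<exists>p\<in>I. p \<le> q \<and> \<mu> p \<in> Z))"
    if e: "(I, \<mu>) \<in> c" for I \<mu>
  proof -
    have h: "(\<exists>q\<in>I. \<mu> q \<in> X) \<and> (\<forall>q\<in>I. \<mu> q \<in> X \<longrightarrow> (\<exists>p\<in>I. p \<le> q \<and> \<mu> p \<in> Z))"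
      using c e unfolding CC_def by auto
    then obtain q0 where q0: "q0 \<in> I" "\<mu> q0 \<in> X" by auto
    have "\<mu> q \<in> X" if "q \<in> I" "\<mu> q \<in> X \<union> Y" for q
    proof (rule ccontr)
      assume "\<mu> q \<notin> X"
      then have "\<mu> q \<in> Y" using that by auto
      then show False using no_both[OF lm sp dj curve_elem_path[OF cf e] q0 \<open>q \<in> I\<close>] by auto
    qed
    then show ?thesis using h by auto
  qed
  then show "c \<in> CC A G T Z (X \<union> Y)" using cf unfolding CC_def by auto
qed

lemma CC_source_union:
  assumes lm: "lorentzian_manifold A G T" and sp: "spacelike A G T (X \<union> Y)"
    and dj: "X \<inter> Y = {}"
  shows "HH A G T X \<subseteq> CC A G T X (X \<union> Y)"
proof
  fix c assume c: "c \<in> HH A G T X"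
  then have cf: "c \<in> fd_curves A G T" unfolding HH_def by blast
  have "(\<exists>q\<in>I. \<mu> q \<in> X \<union> Y) \<and> (\<forall>q\<in>I. \<mu> q \<in> X \<union> Y \<longrightarrow> (\<exists>p\<in>I. p \<le> q \<and> \<mu> p \<in> X))"
    if e: "(I, \<mu>) \<in> c" for I \<mu>
  proof -
    obtain q0 where q0: "q0 \<in> I" "\<mu> q0 \<in> X" using c e unfolding HH_def by auto
    have "\<mu> q \<in> X" if "q \<in> I" "\<mu> q \<in> X \<union> Y" for q
    proof (rule ccontr)
      assume "\<mu> q \<notin> X"
      then have "\<mu> q \<in> Y" using that by auto
      then show False using no_both[OF lm sp dj curve_elem_path[OF cf e] q0 \<open>q \<in> I\<close>] by auto
    qed
    then show ?thesis using q0 by auto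
  qed
  then show "c \<in> CC A G T X (X \<union> Y)" using cf unfolding CC_def by auto
qed

theorem mainTheorem2:
  fixes A :: "('m::{t2_space, second_countable_topology}, 'n::finite) chart set"
    and G :: "('m, 'n) chart \<Rightarrow> 'm \<Rightarrow> real^'n^'n"
    and T :: "('m, 'n) chart \<Rightarrow> 'm \<Rightarrow> real^'n"
    and X Y :: "'m set"
  assumes "lorentzian_manifold A G T"
    and "slice A G T X" and "slice A G T Y"
    and "spacelike A G T (X \<union> Y)"
    and "X \<inter> Y = {}"
  shows "is_slice_product A G T X Y (X \<union> Y) \<and> is_slice_coproduct A G T X Y (X \<union> Y)"
proof -
  note lm = assms(1) and sp = assms(4) and dj = assms(5)
  have sp': "spacelike A G T (Y \<union> X)" using sp by (simp add: Un_commute)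
  have dj': "Y \<inter> X = {}" using dj by (simp add: Int_commute)
  define HX where "HX = HH A G T X"
  define HY where "HY = HH A G T Y"
  have disj: "HX \<inter> HY = {}" unfolding HX_def HY_def using HH_disj[OF lm sp dj] .
  have HP: "HH A G T (X \<union> Y) \<subseteq> HX \<union> HY" unfolding HX_def HY_def by (rule HH_union)
  have sl: "slice A G T (X \<union> Y)"
    using assms(2,3) sp unfolding slice_def by (simp add: closed_Un)
  have HXP: "HX = CC A G T (X \<union> Y) X" unfolding HX_def by (rule HH_eq_CC) auto
  have HYP: "HY = CC A G T (X \<union> Y) Y" unfolding HY_def by (rule HH_eq_CC) auto
  have HXP': "HX = CC A G T X (X \<union> Y)"
    using CC_source_union[OF lm sp dj] CC_sub_HH1[of A G T X "X \<union> Y"] unfolding HX_def by blast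
  have HYP': "HY = CC A G T Y (X \<union> Y)"
    using CC_source_union[OF lm sp' dj'] CC_sub_HH1[of A G T Y "Y \<union> X"] unfolding HY_def
    by (simp add: Un_commute)
  have prod: "is_slice_product A G T X Y (X \<union> Y)"
    unfolding is_slice_product_def
  proof (intro conjI sl, rule bexI[of _ HX], rule bexI[of _ HY], intro allI impI ballI)
    show "HX \<in> slice_hom A G T (X \<union> Y) X" unfolding slice_hom_def HXP by simp
    show "HY \<in> slice_hom A G T (X \<union> Y) Y" unfolding slice_hom_def HYP by simp
    fix Z f g
    assume f: "f \<in> slice_hom A G T Z X" and g: "g \<in> slice_hom A G T Z Y"
    have fX: "f \<subseteq> HX" using f CC_sub_HH2[of A G T Z X] unfolding slice_hom_def HX_def by blast
    have gY: "g \<subseteq> HY" using g CC_sub_HH2[of A G T Z Y] unfolding slice_hom_def HY_def by blast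
    have fP: "f \<subseteq> CC A G T Z (X \<union> Y)" using f CC_target_union[OF lm sp dj, of Z] unfolding slice_hom_def by blast
    have gP: "g \<subseteq> CC A G T Z (X \<union> Y)" using g CC_target_union[OF lm sp' dj', of Z] unfolding slice_hom_def
      by (simp add: Un_commute)
    have ZP: "CC A G T Z (X \<union> Y) \<subseteq> HX \<union> HY" using CC_sub_HH2[of A G T Z "X \<union> Y"] HP by blast
    show "\<exists>!h. h \<in> slice_hom A G T Z (X \<union> Y) \<and> slice_comp HX h = f \<and> slice_comp HY h = g"
    proof (rule ex1I[of _ "f \<union> g"])
      show "f \<union> g \<in> slice_hom A G T Z (X \<union> Y) \<and> slice_comp HX (f \<union> g) = f \<and> slice_comp HY (f \<union> g) = g"
        unfolding slice_hom_def slice_comp_def using fX gY fP gP disj by blast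
    next
      fix h assume "h \<in> slice_hom A G T Z (X \<union> Y) \<and> slice_comp HX h = f \<and> slice_comp HY h = g"
      then show "h = f \<union> g" unfolding slice_hom_def slice_comp_def using ZP by blast
    qed
  qed
  have coprod: "is_slice_coproduct A G T X Y (X \<union> Y)"
    unfolding is_slice_coproduct_def
  proof (intro conjI sl, rule bexI[of _ HX], rule bexI[of _ HY], intro allI impI ballI)
    show "HX \<in> slice_hom A G T X (X \<union> Y)" unfolding slice_hom_def HXP' by simp
    show "HY \<in> slice_hom A G T Y (X \<union> Y)" unfolding slice_hom_def HYP' by simp
    fix Z f g
    assume f: "f \<in> slice_hom A G T X Z" and g: "g \<in> slice_hom A G T Y Z"
    have fX: "f \<subseteq> HX" using f CC_sub_HH1[of A G T X Z] unfolding slice_hom_def HX_def by blast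
    have gY: "g \<subseteq> HY" using g CC_sub_HH1[of A G T Y Z] unfolding slice_hom_def HY_def by blast
    have fP: "f \<subseteq> CC A G T (X \<union> Y) Z" using f CC_mono1[of X "X \<union> Y" A G T Z] unfolding slice_hom_def by blast
    have gP: "g \<subseteq> CC A G T (X \<union> Y) Z" using g CC_mono1[of Y "X \<union> Y" A G T Z] unfolding slice_hom_def by blast
    have PZ: "CC A G T (X \<union> Y) Z \<subseteq> HX \<union> HY" using CC_sub_HH1[of A G T "X \<union> Y" Z] HP by blast
    show "\<exists>!h. h \<in> slice_hom A G T (X \<union> Y) Z \<and> slice_comp h HX = f \<and> slice_comp h HY = g"
    proof (rule ex1I[of _ "f \<union> g"])
      show "f \<union> g \<in> slice_hom A G T (X \<union> Y) Z \<and> slice_comp (f \<union> g) HX = f \<and> slice_comp (f \<union> g) HY = g"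
        unfolding slice_hom_def slice_comp_def using fX gY fP gP disj by blast
    next
      fix h assume "h \<in> slice_hom A G T (X \<union> Y) Z \<and> slice_comp h HX = f \<and> slice_comp h HY = g"
      then show "h = f \<union> g" unfolding slice_hom_def slice_comp_def using PZ by blast
    qed
  qed
  show ?thesis using prod coprod by blast
qed

end
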